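(* Let $A = (a_{ij})$ be a random $n\times n$ matrix with $a_{ij}=0$ for $i\ge j$ and with the entries $a_{ij}$, $1\le i<j\le n$, independent standard normal random variables. Then for every $n \ge 1$, \[ \mathbb{E}_A\Big[\min_{z\in\{\pm1\}^n} z^T A z\Big] \ge -0.601\sqrt{n} - 0.833\, n^{3/2}. \]
   Context: Here $z^T A z = \sum_{1\le i<j\le n} a_{ij} z_i z_j$. *)

theory Defs
  imports "HOL-Probability.Probability"
begin

definition upper_pairs :: "nat \<Rightarrow> (nat \<times> nat) set" where
  "upper_pairs n = {(i, j). i < j \<and> j < n}"

definition sign_vectors :: "nat \<Rightarrow> (nat \<Rightarrow> real) set" where
  "sign_vectors n = {z. (\<forall>i<n. z i = 1 \<or> z i = -1) \<and> (\<forall>i\<ge>n. z i = 0)}"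

text \<open>z^T A z for a strictly upper triangular A given by its entries a(i,j), i<j.\<close>
definition quad_form :: "nat \<Rightarrow> (nat \<times> nat \<Rightarrow> real) \<Rightarrow> (nat \<Rightarrow> real) \<Rightarrow> real" where
  "quad_form n a z = (\<Sum>(i, j)\<in>upper_pairs n. a (i, j) * z i * z j)"

end

theory Submission
  imports Defs
begin

lemma ln2_upper: "ln (2::real) \<le> 0.6935"
proof -
  have "(2::real) \<le> (\<Sum>n<7. inverse (fact n) * 0.6935^n)"
    by (simp add: numeral_eq_Suc fact_numeral)
  also have "\<dots> \<le> (\<Sum>n. inverse (fact n) * (0.6935::real)^n)"
    by (auto simp add: zero_le_mult_iff intro: sum_le_suminf [OF summable_exp])
  finally have "2 \<le> exp (0.6935::real)" by (simp add: exp_def)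
  thus ?thesis by (metis exp_gt_zero ln_exp ln_le_cancel_iff zero_less_numeral)
qed

lemma normal_exp_eq:
  "std_normal_density x * exp (s * x) = exp (s\<^sup>2 / 2) * normal_density s 1 x"
proof -
  have "- x\<^sup>2 / 2 + s * x = s\<^sup>2 / 2 + (- (x - s)\<^sup>2 / 2)"
    by (simp add: power2_eq_square field_simps)
  hence "exp (- x\<^sup>2 / 2) * exp (s * x) = exp (s\<^sup>2 / 2) * exp (- (x - s)\<^sup>2 / 2)"
    by (simp add: exp_add[symmetric])
  thus ?thesis unfolding std_normal_density_def by (simp add: normal_density_def)
qed

lemma mgf_normal:
  assumes "distributed M lborel Y (\<lambda>x. ennreal (std_normal_density x))"
  shows "integrable M (\<lambda>\<omega>. exp (s * Y \<omega>))"
    and "(\<integral>\<omega>. exp (s * Y \<omega>) \<partial>M) = exp (s\<^sup>2 / 2)"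
proof -
  have i: "integrable lborel (\<lambda>x. std_normal_density x * exp (s * x))"
    unfolding normal_exp_eq by simp
  show "integrable M (\<lambda>\<omega>. exp (s * Y \<omega>))"
    using distributed_integrable[OF assms, of "\<lambda>x. exp (s * x)"] i by simp
  have "(\<integral>x. std_normal_density x * exp (s * x) \<partial>lborel) = exp (s\<^sup>2 / 2)"
    unfolding normal_exp_eq by simp
  thus "(\<integral>\<omega>. exp (s * Y \<omega>) \<partial>M) = exp (s\<^sup>2 / 2)"
    using distributed_integral[OF assms, of "\<lambda>x. exp (s * x)"] by simp
qed

lemma upper_pairs_Suc: "upper_pairs (Suc n) = upper_pairs n \<union> (\<lambda>i. (i, n)) ` {..<n}"
  unfolding upper_pairs_def by auto

lemma finite_upper_pairs: "finite (upper_pairs n)"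
  by (rule finite_subset[of _ "{..<n} \<times> {..<n}"]) (auto simp: upper_pairs_def)

lemma card_upper_pairs: "2 * card (upper_pairs n) + n = n * n"
proof (induction n)
  case 0 thus ?case by (simp add: upper_pairs_def)
next
  case (Suc n)
  have d: "upper_pairs n \<inter> (\<lambda>i. (i, n)) ` {..<n} = {}" by (auto simp: upper_pairs_def)
  have "card (upper_pairs (Suc n)) = card (upper_pairs n) + n"
    unfolding upper_pairs_Suc
    by (subst card_Un_disjoint[OF finite_upper_pairs _ d]) (auto simp: card_image inj_on_def)
  thus ?case using Suc by simp
qed

lemma sign_vectors_sub:
  "sign_vectors n \<subseteq> (\<lambda>f i. if i < n then f i else 0) ` (PiE {..<n} (\<lambda>_. {1, -1::real}))"
proof
  fix z assume z: "z \<in> sign_vectors n"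
  have "z = (\<lambda>i. if i < n then restrict z {..<n} i else 0)"
    using z by (auto simp: sign_vectors_def)
  moreover have "restrict z {..<n} \<in> PiE {..<n} (\<lambda>_. {1, -1::real})"
    using z by (auto simp: sign_vectors_def)
  ultimately show "z \<in> (\<lambda>f i. if i < n then f i else 0) ` (PiE {..<n} (\<lambda>_. {1, -1::real}))"
    by blast
qed

lemma finite_sign_vectors: "finite (sign_vectors n)"
  by (rule finite_subset[OF sign_vectors_sub]) (auto intro!: finite_PiE)

lemma card_sign_vectors: "card (sign_vectors n) \<le> 2 ^ n"
proof -
  have "card (sign_vectors n) \<le> card ((\<lambda>f i. if i < n then f i else 0) ` (PiE {..<n} (\<lambda>_. {1, -1::real})))"
    by (rule card_mono[OF _ sign_vectors_sub]) (auto intro!: finite_PiE)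
  also have "\<dots> \<le> card (PiE {..<n} (\<lambda>_. {1, -1::real}))" by (rule card_image_le) (auto intro!: finite_PiE)
  also have "\<dots> = 2 ^ n" by (simp add: card_PiE numeral_2_eq_2)
  finally show ?thesis .
qed

lemma sign_vectors_ne: "sign_vectors n \<noteq> {}"
proof -
  have "(\<lambda>i. if i < n then 1 else 0) \<in> sign_vectors n" by (auto simp: sign_vectors_def)
  thus ?thesis by blast
qed

lemma mgf_quad:
  assumes P: "prob_space M"
    and ind: "prob_space.indep_vars M (\<lambda>_. borel) X (upper_pairs n)"
    and dist: "\<And>p. p \<in> upper_pairs n \<Longrightarrow> distributed M lborel (X p) std_normal_density"
    and z: "z \<in> sign_vectors n"
  shows "integrable M (\<lambda>\<omega>. exp (- l * quad_form n (\<lambda>p. X p \<omega>) z))"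
    and "(\<integral>\<omega>. exp (- l * quad_form n (\<lambda>p. X p \<omega>) z) \<partial>M) = exp (l\<^sup>2 / 2) ^ card (upper_pairs n)"
proof -
  interpret prob_space M by (rule P)
  define c where "c p = - l * (z (fst p) * z (snd p))" for p
  have c2: "(c p)\<^sup>2 = l\<^sup>2" if "p \<in> upper_pairs n" for p
  proof -
    have lt: "fst p < n" "snd p < n" using that by (auto simp: upper_pairs_def)
    have "z (fst p) = 1 \<or> z (fst p) = -1" "z (snd p) = 1 \<or> z (snd p) = -1"
      using z lt unfolding sign_vectors_def by blast+
    thus ?thesis unfolding c_def by (auto simp: power2_eq_square)
  qed
  have eq: "exp (- l * quad_form n (\<lambda>p. X p \<omega>) z) = (\<Prod>p\<in>upper_pairs n. exp (c p * X p \<omega>))" for \<omega>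
  proof -
    have "- l * quad_form n (\<lambda>p. X p \<omega>) z = (\<Sum>p\<in>upper_pairs n. c p * X p \<omega>)"
      unfolding quad_form_def c_def sum_distrib_left
      by (rule sum.cong) (auto simp: algebra_simps)
    thus ?thesis by (simp add: exp_sum finite_upper_pairs)
  qed
  have ind2: "indep_vars (\<lambda>_. borel) (\<lambda>p \<omega>. exp (c p * X p \<omega>)) (upper_pairs n)"
    by (rule indep_vars_compose2[OF ind]) auto
  have int: "integrable M (\<lambda>\<omega>. exp (c p * X p \<omega>))" if "p \<in> upper_pairs n" for p
    using mgf_normal(1)[OF dist[OF that]] .
  show "integrable M (\<lambda>\<omega>. exp (- l * quad_form n (\<lambda>p. X p \<omega>) z))"
    unfolding eq by (rule indep_vars_integrable[OF finite_upper_pairs ind2 int])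
  have "(\<integral>\<omega>. exp (- l * quad_form n (\<lambda>p. X p \<omega>) z) \<partial>M)
      = (\<Prod>p\<in>upper_pairs n. \<integral>\<omega>. exp (c p * X p \<omega>) \<partial>M)"
    unfolding eq by (rule indep_vars_lebesgue_integral[OF finite_upper_pairs ind2 int])
  also have "\<dots> = (\<Prod>p\<in>upper_pairs n. exp (l\<^sup>2 / 2))"
    by (rule prod.cong) (auto simp: mgf_normal(2)[OF dist] c2)
  finally show "(\<integral>\<omega>. exp (- l * quad_form n (\<lambda>p. X p \<omega>) z) \<partial>M) = exp (l\<^sup>2 / 2) ^ card (upper_pairs n)"
    by simp
qed

lemma final_arith:
  fixes E s L N :: real
  assumes s: "s > 0" and N: "2 * N \<le> s^4" and N0: "N \<ge> 0"
    and L: "L \<le> 0.6935"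
    and h: "- ((5/3) / s) * E \<le> s\<^sup>2 * L + N * ((5/3) / s)\<^sup>2 / 2"
  shows "- E \<le> 0.833 * s^3"
proof -
  have "(3 * s / 5) * (- ((5/3) / s) * E) \<le> (3 * s / 5) * (s\<^sup>2 * L + N * ((5/3) / s)\<^sup>2 / 2)"
    using h s by (intro mult_left_mono) auto
  also have "(3 * s / 5) * (- ((5/3) / s) * E) = - E" using s by (simp add: field_simps)
  also have "(3 * s / 5) * (s\<^sup>2 * L + N * ((5/3) / s)\<^sup>2 / 2) = 3/5 * s^3 * L + 5 / 6 * N / s"
    using s by (simp add: field_simps power2_eq_square power3_eq_cube)
  also have "\<dots> \<le> 3/5 * s^3 * 0.6935 + 5 / 6 * (s^4 / 2) / s"
    using s L N N0 by (intro add_mono divide_right_mono mult_left_mono) auto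
  also have "\<dots> = (3/5 * 0.6935 + 5/12) * s^3" using s by (simp add: field_simps power3_eq_cube power4_eq_xxxx)
  also have "\<dots> \<le> 0.833 * s^3" using s by (intro mult_right_mono) auto
  finally show ?thesis .
qed

theorem lemma4:
  fixes M :: "'w measure" and X :: "nat \<times> nat \<Rightarrow> 'w \<Rightarrow> real" and n :: nat
  assumes "prob_space M"
    and "n \<ge> 1"
    and "prob_space.indep_vars M (\<lambda>_. borel) X (upper_pairs n)"
    and "\<And>p. p \<in> upper_pairs n \<Longrightarrow> distributed M lborel (X p) std_normal_density"
  shows "prob_space.expectation M
           (\<lambda>\<omega>. Min ((\<lambda>z. quad_form n (\<lambda>p. X p \<omega>) z) ` sign_vectors n))
         \<ge> - 0.601 * sqrt (real n) - 0.833 * real n powr (3/2)"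
proof -
  interpret prob_space M by (rule assms(1))
  define S where "S = sign_vectors n"
  define Q where "Q z \<omega> = quad_form n (\<lambda>p. X p \<omega>) z" for z \<omega>
  define m where "m \<omega> = Min ((\<lambda>z. Q z \<omega>) ` S)" for \<omega>
  define N where "N = card (upper_pairs n)"
  have fm: "(\<lambda>\<omega>. Min ((\<lambda>z. quad_form n (\<lambda>p. X p \<omega>) z) ` sign_vectors n)) = m"
    by (simp add: fun_eq_iff m_def Q_def S_def)
  define s where "s = sqrt (real n)"
  have s0: "s > 0" using assms(2) by (simp add: s_def)
  have pw: "real n powr (3/2) = s^3"
  proof -
    have "real n powr (3/2) = real n powr 1 * real n powr (1/2)"
      by (subst powr_add[symmetric]) simp
    also have "\<dots> = real n * sqrt (real n)" using assms(2) by (simp add: powr_half_sqrt)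
    also have "\<dots> = s^3" by (simp add: s_def power3_eq_cube)
    finally show ?thesis .
  qed
  show ?thesis
  proof (cases "integrable M m")
    case False
    hence "expectation m = 0" by (rule not_integrable_integral_eq)
    have c: "(0::real) \<le> s^3" using s0 by simp
    show ?thesis unfolding fm using s0 pw \<open>expectation m = 0\<close>
      by (simp add: s_def[symmetric]) (use c s0 in linarith)
  next
    case True
    define l where "l = (5/3) / s"
    have l0: "l > 0" using s0 by (simp add: l_def)
    define E where "E = expectation m"
    have fin: "finite S" "S \<noteq> {}" using finite_sign_vectors sign_vectors_ne by (auto simp: S_def)
    have intz: "integrable M (\<lambda>\<omega>. exp (- l * Q z \<omega>))" if "z \<in> S" for z
      unfolding Q_def using mgf_quad(1)[OF assms(1,3,4)] that by (simp add: S_def)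
    have intv: "(\<integral>\<omega>. exp (- l * Q z \<omega>) \<partial>M) = exp (l\<^sup>2 / 2) ^ N" if "z \<in> S" for z
      unfolding Q_def N_def using mgf_quad(2)[OF assms(1,3,4)] that by (simp add: S_def)
    have bound: "exp (- l * m \<omega>) \<le> (\<Sum>z\<in>S. exp (- l * Q z \<omega>))" for \<omega>
    proof -
      have "m \<omega> \<in> (\<lambda>z. Q z \<omega>) ` S" unfolding m_def using fin by (intro Min_in) auto
      then obtain z0 where z0: "z0 \<in> S" "m \<omega> = Q z0 \<omega>" by auto
      have "exp (- l * Q z0 \<omega>) \<le> (\<Sum>z\<in>S. exp (- l * Q z \<omega>))"
        by (rule member_le_sum) (use z0 fin in auto)
      thus ?thesis using z0 by simp
    qed
    have intsum: "integrable M (\<lambda>\<omega>. \<Sum>z\<in>S. exp (- l * Q z \<omega>))"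
      using intz by (intro Bochner_Integration.integrable_sum) auto
    have meas: "(\<lambda>\<omega>. exp (- l * m \<omega>)) \<in> borel_measurable M"
      using borel_measurable_integrable[OF True] by measurable
    have intexp: "integrable M (\<lambda>\<omega>. exp (- l * m \<omega>))"
    proof (rule Bochner_Integration.integrable_bound[OF intsum meas])
      show "AE x in M. norm (exp (- l * m x)) \<le> norm (\<Sum>z\<in>S. exp (- l * Q z x))"
        using bound by (auto intro!: always_eventually simp: sum_nonneg)
    qed
    define t where "t = - l * E"
    have tang: "exp t * (1 - t) + (- (exp t * l)) * m \<omega> \<le> exp (- l * m \<omega>)" for \<omega>
    proof -
      have "exp t * (1 + (- l * m \<omega> - t)) \<le> exp t * exp (- l * m \<omega> - t)"
        by (intro mult_left_mono exp_ge_add_one_self) auto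
      also have "exp t * exp (- l * m \<omega> - t) = exp (- l * m \<omega>)" by (simp add: exp_add[symmetric])
      finally show ?thesis by (simp add: algebra_simps)
    qed
    have lin: "(\<integral>\<omega>. exp t * (1 - t) + (- (exp t * l)) * m \<omega> \<partial>M) = exp t * (1 - t) + (- (exp t * l)) * E"
      using True by (simp add: E_def prob_space)
    have "exp t = exp t * (1 - t) + (- (exp t * l)) * E" by (simp add: t_def algebra_simps)
    also have "\<dots> \<le> (\<integral>\<omega>. exp (- l * m \<omega>) \<partial>M)"
      unfolding lin[symmetric] by (intro integral_mono intexp tang) (use True in simp)
    also have "\<dots> \<le> (\<integral>\<omega>. (\<Sum>z\<in>S. exp (- l * Q z \<omega>)) \<partial>M)"
      by (intro integral_mono intexp intsum bound)
    also have "\<dots> = (\<Sum>z\<in>S. (\<integral>\<omega>. exp (- l * Q z \<omega>) \<partial>M))"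
      by (rule Bochner_Integration.integral_sum) (rule intz)
    also have "\<dots> = (\<Sum>z\<in>S. exp (l\<^sup>2 / 2) ^ N)"
      by (rule sum.cong[OF refl intv])
    also have "\<dots> = real (card S) * exp (real N * (l\<^sup>2 / 2))"
      using exp_of_nat_mult[of N "l\<^sup>2 / 2"] by simp
    finally have ex: "exp t \<le> real (card S) * exp (real N * (l\<^sup>2 / 2))" .
    have cS: "real (card S) > 0" using fin by (simp add: card_gt_0_iff)
    have "t = ln (exp t)" by simp
    also have "\<dots> \<le> ln (real (card S) * exp (real N * (l\<^sup>2 / 2)))"
      using ex cS by (subst ln_le_cancel_iff) auto
    also have "\<dots> = ln (real (card S)) + real N * (l\<^sup>2 / 2)"
      using cS by (simp add: ln_mult)
    also have "ln (real (card S)) \<le> ln (2 ^ n)"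
      using cS card_sign_vectors[of n] unfolding S_def
      by (subst ln_le_cancel_iff) (auto simp flip: of_nat_power)
    also have "ln ((2::real) ^ n) = real n * ln 2" by (simp add: ln_realpow)
    finally have main: "- l * E \<le> real n * ln 2 + real N * (l\<^sup>2 / 2)" by (simp add: t_def)
    have Nb: "2 * real N \<le> s ^ 4"
    proof -
      have "2 * N + n = n * n" unfolding N_def by (rule card_upper_pairs)
      hence "2 * real N \<le> real n * real n" by (metis le_add1 of_nat_le_iff of_nat_mult of_nat_numeral)
      also have "real n * real n = s^4" by (simp add: s_def power4_eq_xxxx)
      finally show ?thesis .
    qed
    have "- E \<le> 0.833 * s^3"
      by (rule final_arith[OF s0 Nb _ ln2_upper]) (use main in \<open>simp_all add: l_def s_def\<close>)
    thus ?thesis unfolding fm E_def[symmetric] pw using s0 by (simp add: s_def[symmetric])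
  qed
qed

end
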